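(* Let $c,u,d>0$ be constants and let $s,\alpha>0$. Then there exist $S>0$ and smooth functions $f,g\colon[-s,S+s]\to\mathbb{R}$ such that: (i) for $t\in[-s,0]$, $f(t)=ut+c$ and $g(t)=-dt-c$; (ii) for $t\in[S,S+s]$, $f(t)=-d(t-S)+c$ and $g(t)=u(t-S)-c$; (iii) for all $t$, $|f'(t)|\le\max(u,d)$ and $|g'(t)|\le\max(u,d)$; (iv) the total curvatures of the holonomic curves $t\mapsto(f(t),f'(t),f''(t))$ and $t\mapsto(g(t),g'(t),g''(t))$ are each smaller than $\pi+\alpha$.
   Context: For a space curve with continuous unit tangent vector, its total curvature is the length on the unit sphere $\mathbb{S}^2$ of the curve traced by the unit tangent vector (Milnor's total curvature). *)

theory Defs
  imports "HOL-Analysis.Analysis"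
begin

definition smooth_fun :: "(real \<Rightarrow> real) \<Rightarrow> bool" where
  "smooth_fun f \<longleftrightarrow> (\<forall>k x. ((deriv ^^ k) f) differentiable (at x))"

text \<open>Length of a curve on [a,b]: supremum of lengths of inscribed polygons (valued in ereal,
  so that non-rectifiable curves get length infinity).\<close>
definition curve_length :: "(real \<Rightarrow> 'a::metric_space) \<Rightarrow> real \<Rightarrow> real \<Rightarrow> ereal" where
  "curve_length \<gamma> a b =
     (SUP p \<in> {(n, t). t 0 = a \<and> t n = b \<and> (\<forall>i<n. t i \<le> t (Suc i))}.
        ereal (\<Sum>i<fst p. dist (\<gamma> (snd p i)) (\<gamma> (snd p (Suc i)))))"

definition regular_curve_on :: "(real \<Rightarrow> real^3) \<Rightarrow> real \<Rightarrow> real \<Rightarrow> bool" where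
  "regular_curve_on \<gamma> a b \<longleftrightarrow>
     (\<forall>t\<in>{a..b}. \<gamma> differentiable (at t) \<and> vector_derivative \<gamma> (at t) \<noteq> 0)"

definition unit_tangent :: "(real \<Rightarrow> real^3) \<Rightarrow> real \<Rightarrow> real^3" where
  "unit_tangent \<gamma> t = vector_derivative \<gamma> (at t) /\<^sub>R norm (vector_derivative \<gamma> (at t))"

text \<open>Milnor total curvature: length on the unit sphere of the unit tangent indicatrix.\<close>
definition total_curvature :: "(real \<Rightarrow> real^3) \<Rightarrow> real \<Rightarrow> real \<Rightarrow> ereal" where
  "total_curvature \<gamma> a b = curve_length (unit_tangent \<gamma>) a b"

definition holonomic :: "(real \<Rightarrow> real) \<Rightarrow> real \<Rightarrow> real^3" where
  "holonomic f t = vector [f t, deriv f t, deriv (deriv f) t]"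

end

theory Submission
  imports Defs "HOL-Computational_Algebra.Polynomial"
begin

definition Ck :: "nat \<Rightarrow> (real \<Rightarrow> real) \<Rightarrow> bool" where
  "Ck n f \<longleftrightarrow> (\<forall>k<n. \<forall>x. ((deriv ^^ k) f) differentiable (at x))"

lemma smooth_Ck: "smooth_fun f \<longleftrightarrow> (\<forall>n. Ck n f)"
  unfolding smooth_fun_def Ck_def by (meson lessI)

lemma Ck_0[simp]: "Ck 0 f" by (simp add: Ck_def)

lemma Ck_Suc: "Ck (Suc n) f \<longleftrightarrow> (\<forall>x. f differentiable (at x)) \<and> Ck n (deriv f)"
proof -
  have e: "(deriv ^^ Suc k) f = (deriv ^^ k) (deriv f)" for k
    by (simp add: funpow_Suc_right del: funpow.simps)
  have a: "(\<forall>k<Suc n. P k) \<longleftrightarrow> P 0 \<and> (\<forall>k<n. P (Suc k))" for P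
    using less_Suc_eq_0_disj by auto
  show ?thesis unfolding Ck_def a e by simp
qed

lemma Ck_mono: "Ck (Suc n) f \<Longrightarrow> Ck n f"
  by (simp add: Ck_def)

lemma Ck_diff: "Ck (Suc n) f \<Longrightarrow> f differentiable (at x)"
  by (simp add: Ck_Suc)

lemma deriv_fun_eq:
  assumes "\<And>x. (f has_real_derivative g x) (at x)"
  shows "deriv f = g"
  using assms DERIV_imp_deriv by blast

lemma Ck_der: "Ck (Suc n) f \<Longrightarrow> (f has_real_derivative deriv f x) (at x)"
  by (simp add: Ck_Suc DERIV_deriv_iff_real_differentiable)

lemma Ck_const: "Ck n (\<lambda>x. c)"
proof (induction n arbitrary: c)
  case (Suc n)
  have "deriv (\<lambda>x. c) = (\<lambda>x. 0)" by (rule deriv_fun_eq) auto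
  then show ?case using Suc by (simp add: Ck_Suc)
qed simp

lemma Ck_id: "Ck n (\<lambda>x. x)"
proof (cases n)
  case (Suc m)
  have "deriv (\<lambda>x::real. x) = (\<lambda>x. 1)" by (rule deriv_fun_eq) auto
  then show ?thesis using Suc by (simp add: Ck_Suc Ck_const)
qed simp

lemma Ck_add: "Ck n f \<Longrightarrow> Ck n g \<Longrightarrow> Ck n (\<lambda>x. f x + g x)"
proof (induction n arbitrary: f g)
  case (Suc n)
  have "deriv (\<lambda>x. f x + g x) = (\<lambda>x. deriv f x + deriv g x)"
    apply (rule deriv_fun_eq)
    using Suc.prems by (auto intro!: derivative_eq_intros Ck_der)
  then show ?case using Suc by (auto simp: Ck_Suc)
qed simp

lemma Ck_mult: "Ck n f \<Longrightarrow> Ck n g \<Longrightarrow> Ck n (\<lambda>x. f x * g x)"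
proof (induction n arbitrary: f g)
  case (Suc n)
  have "deriv (\<lambda>x. f x * g x) = (\<lambda>x. deriv f x * g x + f x * deriv g x)"
    apply (rule deriv_fun_eq)
    using Suc.prems by (auto intro!: derivative_eq_intros Ck_der)
  moreover have "Ck n (\<lambda>x. deriv f x * g x)" "Ck n (\<lambda>x. f x * deriv g x)"
    using Suc.IH[of "deriv f" g] Suc.IH[of f "deriv g"] Ck_mono[OF Suc.prems(1)] Ck_mono[OF Suc.prems(2)]
      Suc.prems by (auto simp: Ck_Suc)
  ultimately show ?case using Suc.prems by (auto simp: Ck_Suc intro!: Ck_add)
qed simp

lemma Ck_affine: "Ck n f \<Longrightarrow> Ck n (\<lambda>x. f (a * x + b))"
proof (induction n arbitrary: f)
  case (Suc n)
  have D: "((\<lambda>x. f (a*x+b)) has_real_derivative a * deriv f (a*x+b)) (at x)" for x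
  proof -
    have "((\<lambda>x. a*x+b) has_real_derivative a) (at x)" by (auto intro!: derivative_eq_intros)
    from DERIV_chain2[OF Ck_der[OF Suc.prems] this] show ?thesis by (simp add: mult.commute)
  qed
  then have "deriv (\<lambda>x. f (a * x + b)) = (\<lambda>x. a * deriv f (a * x + b))"
    by (rule deriv_fun_eq)
  moreover have "Ck n (\<lambda>x. deriv f (a * x + b))" using Suc by (auto simp: Ck_Suc)
  ultimately show ?case using Suc.prems D
    by (auto simp: Ck_Suc real_differentiable_def intro!: Ck_mult Ck_const)
qed simp

lemma smooth_antideriv:
  assumes "\<And>x. (f has_real_derivative g x) (at x)" "smooth_fun g"
  shows "smooth_fun f"
proof -
  have "deriv f = g" using assms(1) by (rule deriv_fun_eq)
  then have "Ck (Suc n) f" for n using assms by (auto simp: Ck_Suc smooth_Ck real_differentiable_def)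
  then show ?thesis unfolding smooth_Ck using Ck_mono by blast
qed

lemma smooth_seq:
  assumes "F 0 = f" "\<And>n x. (F n has_real_derivative F (Suc n) x) (at x)"
  shows "smooth_fun f"
proof -
  have "(deriv ^^ n) f = F n" for n
  proof (induction n)
    case (Suc n)
    then show ?case using assms(2) by (simp add: deriv_fun_eq)
  qed (simp add: assms(1))
  then show ?thesis unfolding smooth_fun_def using assms(2) real_differentiable_def by metis
qed

fun Qp :: "nat \<Rightarrow> real poly" where
  "Qp 0 = 1"
| "Qp (Suc n) = [:0,0,1:] * (Qp n - pderiv (Qp n))"

definition EE :: "nat \<Rightarrow> real \<Rightarrow> real" where
  "EE n x = (if x > 0 then poly (Qp n) (1/x) * exp (-1/x) else 0)"

lemma poly_exp_lim: "((\<lambda>z. poly q z * exp (-z)) \<longlongrightarrow> 0) at_top" for q :: "real poly"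
proof -
  have "((\<lambda>z. \<Sum>i\<le>degree q. coeff q i * (z ^ i / exp z)) \<longlongrightarrow> (\<Sum>i\<le>degree q. coeff q i * 0)) at_top"
    by (intro tendsto_intros tendsto_power_div_exp_0)
  moreover have "(\<Sum>i\<le>degree q. coeff q i * (z ^ i / exp z)) = poly q z * exp (-z)" for z
    by (simp add: poly_altdef sum_distrib_right exp_minus divide_inverse mult.assoc)
  ultimately show ?thesis by simp
qed

lemma poly_exp_lim0: "((\<lambda>y. poly q (1/y) * exp (-1/y)) \<longlongrightarrow> 0) (at_right 0)" for q :: "real poly"
proof -
  have "((\<lambda>y. poly q (inverse y) * exp (- inverse y)) \<longlongrightarrow> 0) (at_right 0)"
    using filterlim_compose[OF poly_exp_lim filterlim_inverse_at_top_right] by (simp add: o_def)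
  then show ?thesis by (simp add: inverse_eq_divide)
qed

lemma EE_deriv: "(EE n has_real_derivative EE (Suc n) x) (at x)"
proof (cases "x > 0")
  case True
  have "((\<lambda>x. poly (Qp n) (1/x) * exp (-1/x)) has_real_derivative EE (Suc n) x) (at x)"
  proof -
    have "((\<lambda>x. poly (Qp n) (1/x) * exp (-1/x)) has_real_derivative
       poly (pderiv (Qp n)) (1/x) * (- 1 / x^2) * exp (-1/x) + poly (Qp n) (1/x) * (exp (-1/x) * (1 / x^2))) (at x)"
      using True
      by (auto intro!: derivative_eq_intros DERIV_chain2[OF poly_DERIV] simp: power2_eq_square)
    moreover have "poly (pderiv (Qp n)) (1/x) * (- 1 / x^2) * exp (-1/x) + poly (Qp n) (1/x) * (exp (-1/x) * (1 / x^2))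
       = EE (Suc n) x"
      using True by (simp add: EE_def poly_diff field_simps power2_eq_square)
    ultimately show ?thesis by simp
  qed
  then show ?thesis
    by (rule has_field_derivative_transform_within_open[where S="{0<..}"]) (use True in \<open>auto simp: EE_def\<close>)
next
  case False
  show ?thesis
  proof (cases "x < 0")
    case True
    have "((\<lambda>x. 0) has_real_derivative 0) (at x)" by simp
    then have "(EE n has_real_derivative 0) (at x)"
      by (rule has_field_derivative_transform_within_open[where S="{..<0}"]) (use True in \<open>auto simp: EE_def\<close>)
    then show ?thesis using True by (simp add: EE_def)
  next
    case False
    with \<open>\<not> x > 0\<close> have x0: "x = 0" by simp
    have R: "((\<lambda>y. (EE n y - EE n 0) / (y - 0)) \<longlongrightarrow> 0) (at_right 0)"
    proof -
      have "((\<lambda>y. poly (pCons 0 (Qp n)) (1/y) * exp (-1/y)) \<longlongrightarrow> 0) (at_right 0)"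
        by (rule poly_exp_lim0)
      then show ?thesis
        apply (rule Lim_transform_eventually)
        apply (simp add: eventually_at_right_field)
        apply (rule exI[of _ 1])
        apply (auto simp: EE_def field_simps)
        done
    qed
    have L: "((\<lambda>y. (EE n y - EE n 0) / (y - 0)) \<longlongrightarrow> 0) (at_left 0)"
    proof -
      have "((\<lambda>y. 0::real) \<longlongrightarrow> 0) (at_left 0)" by simp
      then show ?thesis
        apply (rule Lim_transform_eventually)
        apply (simp add: eventually_at_left_field)
        apply (rule exI[of _ "-1"])
        apply (auto simp: EE_def)
        done
    qed
    have "(EE n has_real_derivative 0) (at 0)"
      unfolding has_field_derivative_iff using R L by (simp add: filterlim_at_split)
    then show ?thesis using x0 by (simp add: EE_def)
  qed
qed

lemma smooth_EE: "smooth_fun (EE 0)"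
  by (rule smooth_seq[of EE]) (auto intro: EE_deriv)

lemma EE0: "EE 0 x = (if x > 0 then exp (-1/x) else 0)"
  by (simp add: EE_def)

lemma antideriv_exists:
  fixes g :: "real \<Rightarrow> real"
  assumes "continuous_on UNIV g"
  shows "\<exists>F. \<forall>x. (F has_real_derivative g x) (at x)"
proof -
  define F where "F x = integral {0..x} g - integral {x..0} g" for x
  have int: "g integrable_on {p..q}" for p q
    using assms by (intro integrable_continuous_interval) (auto intro: continuous_on_subset)
  have "(F has_real_derivative g x) (at x)" for x
  proof -
    define a where "a = min x 0 - 1"
    define b where "b = max x 0 + 1"
    have eq: "F y = integral {a..y} g - integral {a..0} g" if "y \<in> {a<..<b}" for y
    proof (cases "y \<ge> 0")
      case True
      have "integral {y..0} g = 0"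
        using True by (cases "y = 0") auto
      moreover have "integral {a..0} g + integral {0..y} g = integral {a..y} g"
        by (intro Henstock_Kurzweil_Integration.integral_combine) (use True in \<open>auto simp: a_def int min_def\<close>)
      ultimately show ?thesis by (simp add: F_def)
    next
      case False
      have "integral {0..y} g = 0" using False by auto
      moreover have "integral {a..y} g + integral {y..0} g = integral {a..0} g"
        by (intro Henstock_Kurzweil_Integration.integral_combine) (use False that in \<open>auto simp: a_def int min_def\<close>)
      ultimately show ?thesis by (simp add: F_def)
    qed
    have "((\<lambda>y. integral {a..y} g) has_real_derivative g x) (at x within {a..b})"
      by (rule integral_has_real_derivative) (auto simp: a_def b_def intro: continuous_on_subset[OF assms])
    then have "((\<lambda>y. integral {a..y} g) has_real_derivative g x) (at x)"
      using at_within_Icc_at[of a x b] by (simp add: a_def b_def)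
    then have "((\<lambda>y. integral {a..y} g - integral {a..0} g) has_real_derivative g x) (at x)"
      by (auto intro!: derivative_eq_intros)
    then show ?thesis
      by (rule has_field_derivative_transform_within_open[where S="{a<..<b}"]) (auto simp: a_def b_def eq)
  qed
  then show ?thesis by blast
qed

lemma smooth_add: "smooth_fun f \<Longrightarrow> smooth_fun g \<Longrightarrow> smooth_fun (\<lambda>x. f x + g x)"
  by (simp add: smooth_Ck Ck_add)
lemma smooth_mult: "smooth_fun f \<Longrightarrow> smooth_fun g \<Longrightarrow> smooth_fun (\<lambda>x. f x * g x)"
  by (simp add: smooth_Ck Ck_mult)
lemma smooth_const: "smooth_fun (\<lambda>x. c)"
  by (simp add: smooth_Ck Ck_const)
lemma smooth_id: "smooth_fun (\<lambda>x. x)"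
  by (simp add: smooth_Ck Ck_id)
lemma smooth_affine: "smooth_fun f \<Longrightarrow> smooth_fun (\<lambda>x. f (a * x + b))"
  by (simp add: smooth_Ck Ck_affine)
lemma smooth_diff: "smooth_fun f \<Longrightarrow> smooth_fun g \<Longrightarrow> smooth_fun (\<lambda>x. f x - g x)"
proof -
  assume "smooth_fun f" "smooth_fun g"
  then have "smooth_fun (\<lambda>x. f x + (-1) * g x)" by (intro smooth_add smooth_mult smooth_const)
  then show ?thesis by simp
qed
lemma smooth_deriv: "smooth_fun f \<Longrightarrow> smooth_fun (deriv f)"
  by (metis smooth_Ck Ck_Suc)
lemma smooth_has_deriv: "smooth_fun f \<Longrightarrow> (f has_real_derivative deriv f x) (at x)"
  using Ck_der smooth_Ck by blast
lemma smooth_cont: "smooth_fun f \<Longrightarrow> continuous_on UNIV f"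
  by (meson DERIV_isCont continuous_at_imp_continuous_on smooth_has_deriv)

lemma smooth_step_exists:
  "\<exists>H. smooth_fun H \<and> (\<forall>x\<le>0. H x = 0) \<and> (\<forall>x\<ge>1. H x = 1) \<and> (\<forall>x. 0 \<le> H x \<and> H x \<le> 1)"
proof -
  define bb where "bb x = EE 0 x * EE 0 ((-1) * x + 1)" for x
  have sb: "smooth_fun bb" unfolding bb_def
    by (intro smooth_mult smooth_affine smooth_EE)
  have bb0: "bb x = 0" if "x \<le> 0 \<or> x \<ge> 1" for x using that by (auto simp: bb_def EE0)
  have bbpos: "bb x > 0" if "0 < x" "x < 1" for x using that by (auto simp: bb_def EE0)
  have bbnn: "bb x \<ge> 0" for x by (cases "0 < x \<and> x < 1") (auto simp: bb0 less_imp_le[OF bbpos])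
  obtain B where B: "\<And>x. (B has_real_derivative bb x) (at x)"
    using antideriv_exists[OF smooth_cont[OF sb]] by blast
  have sB: "smooth_fun B" using B sb by (rule smooth_antideriv)
  have mono: "B x \<le> B y" if "x \<le> y" for x y
  proof (cases "x = y")
    case False
    then have "x < y" using that by simp
    from MVT2[OF this, of B bb] B obtain z where "B y - B x = (y - x) * bb z" by blast
    moreover have "(y - x) * bb z \<ge> 0" using \<open>x < y\<close> bbnn[of z] by simp
    ultimately show ?thesis by simp
  qed simp
  have pos: "B 0 < B 1"
  proof -
    from MVT2[of 0 1 B bb] B obtain z where "0 < z" "z < 1" "B 1 - B 0 = (1 - 0) * bb z" by force
    then show ?thesis using bbpos[of z] by simp
  qed
  have left: "B x = B 0" if "x \<le> 0" for x
  proof -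
    have d0: "(B has_real_derivative 0) (at y within {..0})" if "y \<in> {..0}" for y
    proof -
      have "bb y = 0" using that bb0[of y] by simp
      then show ?thesis using has_field_derivative_at_within[OF B[of y]] by simp
    qed
    obtain c where "\<forall>x\<in>{..0::real}. B x = c"
      using has_field_derivative_zero_constant[OF convex_real_interval(2) d0] by blast
    then show ?thesis using that by (metis atMost_iff order_refl)
  qed
  have right: "B x = B 1" if "x \<ge> 1" for x
  proof -
    have d0: "(B has_real_derivative 0) (at y within {1..})" if "y \<in> {1..}" for y
    proof -
      have "bb y = 0" using that bb0[of y] by simp
      then show ?thesis using has_field_derivative_at_within[OF B[of y]] by simp
    qed
    obtain c where "\<forall>x\<in>{1::real..}. B x = c"
      using has_field_derivative_zero_constant[OF convex_real_interval(1) d0] by blast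
    then show ?thesis using that by (metis atLeast_iff order_refl)
  qed
  define H where "H x = (1 / (B 1 - B 0)) * (B x - B 0)" for x
  have "smooth_fun H" unfolding H_def by (rule smooth_mult[OF smooth_const smooth_diff[OF sB smooth_const]])
  moreover have "\<forall>x\<le>0. H x = 0" using left unfolding H_def by (metis diff_self mult_zero_right)
  moreover have "\<forall>x\<ge>1. H x = 1" using pos right unfolding H_def by (metis diff_gt_0_iff_gt divide_self_if less_irrefl times_divide_eq_left mult_1)
  moreover have "\<forall>x. 0 \<le> H x \<and> H x \<le> 1"
  proof
    fix x
    have l: "B 0 \<le> B x" using left[of x] mono[of 0 x] by linarith
    have r: "B x \<le> B 1" using right[of x] mono[of x 1] by linarith
    have "H x = (B x - B 0) / (B 1 - B 0)" by (simp add: H_def)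
    then show "0 \<le> H x \<and> H x \<le> 1" using l r pos by simp
  qed
  ultimately show ?thesis by blast
qed

lemma vec3_eq: "(vector [a,b,c] :: real^3) = vector [a',b',c'] \<longleftrightarrow> a = a' \<and> b = b' \<and> c = c'"
  by (auto simp: vec_eq_iff forall_3)

lemma vec3_diff: "(vector [a,b,c] :: real^3) - vector [a',b',c'] = vector [a-a',b-b',c-c']"
  by (auto simp: vec_eq_iff forall_3)

lemma vec3_add: "(vector [a,b,c] :: real^3) + vector [a',b',c'] = vector [a+a',b+b',c+c']"
  by (auto simp: vec_eq_iff forall_3)

lemma vec3_scale: "r *\<^sub>R (vector [a,b,c] :: real^3) = vector [r*a,r*b,r*c]"
  by (auto simp: vec_eq_iff forall_3)

lemma vec3_norm: "norm (vector [a,b,c] :: real^3) = sqrt (a^2 + b^2 + c^2)"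
  by (simp add: norm_vec_def L2_set_def sum_3)

lemma vec3_zero: "(vector [a,b,c] :: real^3) = 0 \<longleftrightarrow> a = 0 \<and> b = 0 \<and> c = 0"
  by (auto simp: vec_eq_iff forall_3)

lemma vec3_deriv:
  assumes "(a has_real_derivative a') (at t)" "(b has_real_derivative b') (at t)" "(c has_real_derivative c') (at t)"
  shows "((\<lambda>t. vector [a t, b t, c t] :: real^3) has_vector_derivative vector [a', b', c']) (at t)"
proof -
  have e: "vector [x, y, z] = x *\<^sub>R (vector [1,0,0] :: real^3) + y *\<^sub>R vector [0,1,0] + z *\<^sub>R vector [0,0,1]" for x y z
    by (simp add: vec3_scale vec3_add)
  have "((\<lambda>t. a t *\<^sub>R (vector [1,0,0] :: real^3) + b t *\<^sub>R vector [0,1,0] + c t *\<^sub>R vector [0,0,1])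
     has_vector_derivative a' *\<^sub>R (vector [1,0,0] :: real^3) + b' *\<^sub>R vector [0,1,0] + c' *\<^sub>R vector [0,0,1]) (at t)"
    using assms by (auto intro!: derivative_eq_intros)
  then show ?thesis by (simp only: e[symmetric])
qed

lemma normalize_lip:
  fixes a b :: "'a::real_inner"
  assumes "norm a \<ge> 1" "norm b \<ge> 1"
  shows "norm (a /\<^sub>R norm a - b /\<^sub>R norm b) \<le> norm (a - b)"
proof -
  define A where "A = norm a"
  define B where "B = norm b"
  define c where "c = inner a b"
  have A1: "A \<ge> 1" and B1: "B \<ge> 1" using assms by (auto simp: A_def B_def)
  have cs: "c \<le> A * B" unfolding c_def A_def B_def by (rule norm_cauchy_schwarz)
  have nd: "(norm (x - y))^2 = (norm x)^2 + (norm y)^2 - 2 * inner x y" for x y :: 'a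
    by (simp add: power2_norm_eq_inner inner_diff_left inner_diff_right inner_commute)
  have l: "(norm (a /\<^sub>R norm a - b /\<^sub>R norm b))^2 = 2 - 2 * c / (A * B)"
  proof -
    have "a \<noteq> 0" "b \<noteq> 0" using assms by (metis norm_zero not_one_le_zero)+
    then show ?thesis unfolding nd A_def B_def c_def by (simp add: field_simps)
  qed
  have r: "(norm (a - b))^2 = A^2 + B^2 - 2 * c"
    unfolding A_def B_def c_def
    by (simp add: power2_norm_eq_inner inner_diff_left inner_diff_right inner_commute)
  have AB: "A * B \<ge> 1" using A1 B1 by (metis mult_mono' mult_1 zero_le_one order_trans)
  have "2 * c * (A * B - 1) \<le> 2 * (A * B) * (A * B - 1)"
    using cs AB by (intro mult_right_mono) auto
  also have "\<dots> \<le> A * B * (A^2 + B^2 - 2)"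
  proof -
    have "0 \<le> A * B * (A - B)^2" using A1 B1 by simp
    then show ?thesis by (simp add: power2_eq_square algebra_simps)
  qed
  finally have key: "2 * c * (A * B - 1) \<le> A * B * (A^2 + B^2 - 2)" .
  have "2 - 2 * c / (A * B) \<le> A^2 + B^2 - 2 * c"
  proof -
    have pos: "A * B > 0" using AB by simp
    have "(2 - 2 * c / (A * B)) * (A * B) = 2 * A * B - 2 * c" using pos A1 B1 by (simp add: field_simps)
    moreover have "(A^2 + B^2 - 2 * c) * (A * B) \<ge> 2 * A * B - 2 * c" using key by (simp add: algebra_simps)
    ultimately have "(2 - 2 * c / (A * B)) * (A * B) \<le> (A^2 + B^2 - 2 * c) * (A * B)" by simp
    then show ?thesis using pos by (simp add: mult_le_cancel_right)
  qed
  then have "(norm (a /\<^sub>R norm a - b /\<^sub>R norm b))^2 \<le> (norm (a - b))^2" using l r by simp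
  then show ?thesis by (simp add: power2_le_iff_abs_le)
qed

definition NV :: "real \<Rightarrow> real \<Rightarrow> real \<Rightarrow> real^3" where
  "NV a b c = vector [a,b,c] /\<^sub>R norm (vector [a,b,c] :: real^3)"

lemma NV_lip:
  assumes "p * p' > 0"
  shows "dist (NV p q r) (NV p' q' r') \<le> \<bar>q/p - q'/p'\<bar> + \<bar>r/p - r'/p'\<bar>"
proof -
  have p: "p \<noteq> 0" "p' \<noteq> 0" using assms by auto
  define A where "A = (vector [1, q/p, r/p] :: real^3)"
  define A' where "A' = (vector [1, q'/p', r'/p'] :: real^3)"
  have vA: "vector [p,q,r] = p *\<^sub>R A" "vector [p',q',r'] = p' *\<^sub>R A'"
    using p by (auto simp: A_def A'_def vec3_scale)
  have nA: "norm A \<ge> 1" "norm A' \<ge> 1"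
    by (auto simp: A_def A'_def vec3_norm)
  have NA: "NV p q r = (sgn p) *\<^sub>R (A /\<^sub>R norm A)" "NV p' q' r' = (sgn p') *\<^sub>R (A' /\<^sub>R norm A')"
    using p nA unfolding NV_def vA by (auto simp: sgn_real_def)
  have sg: "sgn p = sgn p'" using assms by (auto simp: sgn_real_def zero_less_mult_iff)
  have "dist (NV p q r) (NV p' q' r') = norm (sgn p' *\<^sub>R (A /\<^sub>R norm A - A' /\<^sub>R norm A'))"
    unfolding NA sg dist_norm by (simp add: scaleR_diff_right)
  also have "\<dots> = norm (A /\<^sub>R norm A - A' /\<^sub>R norm A')" using p by (simp add: abs_sgn)
  also have "\<dots> \<le> norm (A - A')" by (rule normalize_lip[OF nA])
  also have "\<dots> = sqrt ((q/p - q'/p')^2 + (r/p - r'/p')^2)"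
    by (simp add: A_def A'_def vec3_diff vec3_norm)
  also have "\<dots> \<le> \<bar>q/p - q'/p'\<bar> + \<bar>r/p - r'/p'\<bar>"
    by (rule sqrt_sum_squares_le_sum_abs)
  finally show ?thesis .
qed

lemma chord_arc:
  "dist (vector [-sin a, -cos a, 0] :: real^3) (vector [-sin b, -cos b, 0]) \<le> \<bar>a - b\<bar>"
proof -
  have "dist (vector [-sin a, -cos a, 0] :: real^3) (vector [-sin b, -cos b, 0])
      = sqrt ((sin a - sin b)^2 + (cos a - cos b)^2)"
    by (simp add: dist_norm vec3_diff vec3_norm power2_commute)
  also have "(sin a - sin b)^2 + (cos a - cos b)^2 = (2 * sin ((a - b)/2))^2"
  proof -
    define w where "w = (a - b)/2"
    define z where "z = (a + b)/2"
    have e1: "sin a - sin b = 2 * sin w * cos z" by (simp add: sin_diff_sin w_def z_def)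
    have "(b - a)/2 = - w" by (simp add: w_def field_simps)
    then have e2: "cos a - cos b = - (2 * sin w * sin z)" using cos_diff_cos[of a b] by (simp add: z_def)
    have "(sin a - sin b)^2 + (cos a - cos b)^2 = (2 * sin w)^2 * ((cos z)^2 + (sin z)^2)"
      unfolding e1 e2 by algebra
    then show ?thesis by (simp add: w_def)
  qed
  also have "sqrt ((2 * sin ((a - b)/2))^2) = 2 * \<bar>sin ((a - b)/2)\<bar>" unfolding real_sqrt_abs by (simp add: abs_mult)
  also have "\<dots> \<le> 2 * \<bar>(a - b)/2\<bar>" using abs_sin_x_le_abs_x[of "(a-b)/2"] by linarith
  finally show ?thesis by simp
qed

definition VarLe :: "(real \<Rightarrow> 'a::metric_space) \<Rightarrow> real \<Rightarrow> real \<Rightarrow> real \<Rightarrow> bool" where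
  "VarLe \<gamma> a b V \<longleftrightarrow> (\<exists>\<Phi>. (\<forall>x y. a \<le> x \<longrightarrow> x \<le> y \<longrightarrow> y \<le> b \<longrightarrow> dist (\<gamma> x) (\<gamma> y) \<le> \<Phi> y - \<Phi> x)
      \<and> \<Phi> b - \<Phi> a \<le> V)"

lemma curve_length_le:
  assumes "VarLe \<gamma> a b V"
  shows "curve_length \<gamma> a b \<le> ereal V"
proof -
  obtain \<Phi> where P: "\<And>x y. a \<le> x \<Longrightarrow> x \<le> y \<Longrightarrow> y \<le> b \<Longrightarrow> dist (\<gamma> x) (\<gamma> y) \<le> \<Phi> y - \<Phi> x"
    and V: "\<Phi> b - \<Phi> a \<le> V"
    using assms unfolding VarLe_def by blast
  show ?thesis unfolding curve_length_def
  proof (rule SUP_least)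
    fix pt assume "pt \<in> {(n, t). t 0 = a \<and> t n = b \<and> (\<forall>i<n. t i \<le> t (Suc i))}"
    then obtain n t where pt: "pt = (n, t)" and t0: "t 0 = a" and tn: "t n = b"
      and mono: "\<And>i. i < n \<Longrightarrow> t i \<le> t (Suc i)" by blast
    have m: "t i \<le> t j" if "i \<le> j" "j \<le> n" for i j
      using that
    proof (induction j)
      case (Suc j)
      then show ?case by (cases "i = Suc j") (auto intro: order_trans[OF _ mono])
    qed simp
    have "(\<Sum>i<n. dist (\<gamma> (t i)) (\<gamma> (t (Suc i)))) \<le> (\<Sum>i<n. \<Phi> (t (Suc i)) - \<Phi> (t i))"
    proof (rule sum_mono)
      fix i assume "i \<in> {..<n}"
      then have "i < n" by simp
      then show "dist (\<gamma> (t i)) (\<gamma> (t (Suc i))) \<le> \<Phi> (t (Suc i)) - \<Phi> (t i)"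
        using m[of 0 i] m[of "Suc i" n] mono[of i] t0 tn by (intro P) auto
    qed
    also have "\<dots> = \<Phi> (t n) - \<Phi> (t 0)" by (rule sum_lessThan_telescope)
    finally show "ereal (\<Sum>i<fst pt. dist (\<gamma> (snd pt i)) (\<gamma> (snd pt (Suc i)))) \<le> ereal V"
      using pt t0 tn V by simp
  qed
qed

lemma VarLe_combine:
  assumes "a \<le> m" "m \<le> b" "VarLe \<gamma> a m V1" "VarLe \<gamma> m b V2"
  shows "VarLe \<gamma> a b (V1 + V2)"
proof -
  obtain \<Phi>1 where P1: "\<And>x y. a \<le> x \<Longrightarrow> x \<le> y \<Longrightarrow> y \<le> m \<Longrightarrow> dist (\<gamma> x) (\<gamma> y) \<le> \<Phi>1 y - \<Phi>1 x"
    and V1: "\<Phi>1 m - \<Phi>1 a \<le> V1"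
    using assms(3) unfolding VarLe_def by blast
  obtain \<Phi>2 where P2: "\<And>x y. m \<le> x \<Longrightarrow> x \<le> y \<Longrightarrow> y \<le> b \<Longrightarrow> dist (\<gamma> x) (\<gamma> y) \<le> \<Phi>2 y - \<Phi>2 x"
    and V2: "\<Phi>2 b - \<Phi>2 m \<le> V2"
    using assms(4) unfolding VarLe_def by blast
  define \<Phi> where "\<Phi> x = (if x \<le> m then \<Phi>1 x else \<Phi>2 x - \<Phi>2 m + \<Phi>1 m)" for x
  have "\<forall>x y. a \<le> x \<longrightarrow> x \<le> y \<longrightarrow> y \<le> b \<longrightarrow> dist (\<gamma> x) (\<gamma> y) \<le> \<Phi> y - \<Phi> x"
  proof (intro allI impI)
    fix x y assume xy: "a \<le> x" "x \<le> y" "y \<le> b"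
    show "dist (\<gamma> x) (\<gamma> y) \<le> \<Phi> y - \<Phi> x"
    proof (cases "y \<le> m")
      case True then show ?thesis using P1 xy by (auto simp: \<Phi>_def)
    next
      case False
      show ?thesis
      proof (cases "x \<le> m")
        case True
        have "dist (\<gamma> x) (\<gamma> y) \<le> dist (\<gamma> x) (\<gamma> m) + dist (\<gamma> m) (\<gamma> y)" by (rule dist_triangle)
        also have "\<dots> \<le> (\<Phi>1 m - \<Phi>1 x) + (\<Phi>2 y - \<Phi>2 m)"
          using P1[of x m] P2[of m y] xy True False by (intro add_mono) auto
        finally show ?thesis using True False by (simp add: \<Phi>_def)
      next
        case False
        then show ?thesis using P2 xy \<open>\<not> y \<le> m\<close> by (auto simp: \<Phi>_def)
      qed
    qed
  qed
  moreover have "\<Phi> b - \<Phi> a \<le> V1 + V2"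
    using V1 V2 assms(1,2) by (cases "b \<le> m") (auto simp: \<Phi>_def)
  ultimately show ?thesis unfolding VarLe_def by blast
qed

lemma VarLe_const:
  assumes "\<And>x. a \<le> x \<Longrightarrow> x \<le> b \<Longrightarrow> \<gamma> x = \<gamma> a"
  shows "VarLe \<gamma> a b 0"
  unfolding VarLe_def
proof (rule exI[of _ "\<lambda>x. 0"], intro conjI allI impI)
  fix x y assume "a \<le> x" "x \<le> y" "y \<le> b"
  then have "\<gamma> x = \<gamma> a" "\<gamma> y = \<gamma> a" using assms[of x] assms[of y] by (meson order_trans)+
  then show "dist (\<gamma> x) (\<gamma> y) \<le> 0 - 0" by simp
qed simp

lemma VarLe_lip:
  assumes "\<And>x y. a \<le> x \<Longrightarrow> x \<le> y \<Longrightarrow> y \<le> b \<Longrightarrow> dist (\<gamma> x) (\<gamma> y) \<le> L * (y - x)"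
  shows "VarLe \<gamma> a b (L * (b - a))"
  unfolding VarLe_def
proof (rule exI[of _ "\<lambda>x. L * x"], intro conjI allI impI)
  fix x y assume "a \<le> x" "x \<le> y" "y \<le> b"
  then show "dist (\<gamma> x) (\<gamma> y) \<le> L * y - L * x" using assms[of x y] by (simp add: right_diff_distrib)
qed (simp add: right_diff_distrib)

lemma VarLe_mono_fun:
  assumes "\<And>x y. a \<le> x \<Longrightarrow> x \<le> y \<Longrightarrow> y \<le> b \<Longrightarrow> dist (\<gamma> x) (\<gamma> y) \<le> \<Phi> y - \<Phi> x"
  shows "VarLe \<gamma> a b (\<Phi> b - \<Phi> a)"
  unfolding VarLe_def using assms by blast

lemma VarLe_V_mono: "VarLe \<gamma> a b V \<Longrightarrow> V \<le> V' \<Longrightarrow> VarLe \<gamma> a b V'"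
  unfolding VarLe_def by (meson order_trans)

lemma VarLe_reverse:
  assumes "VarLe \<gamma> a b V" "\<And>x y. dist (\<delta> x) (\<delta> y) = dist (\<gamma> (c - x)) (\<gamma> (c - y))"
  shows "VarLe \<delta> (c - b) (c - a) V"
proof -
  obtain \<Phi> where P: "\<And>x y. a \<le> x \<Longrightarrow> x \<le> y \<Longrightarrow> y \<le> b \<Longrightarrow> dist (\<gamma> x) (\<gamma> y) \<le> \<Phi> y - \<Phi> x"
    and V: "\<Phi> b - \<Phi> a \<le> V"
    using assms(1) unfolding VarLe_def by blast
  show ?thesis unfolding VarLe_def
  proof (intro exI[of _ "\<lambda>x. - \<Phi> (c - x)"] conjI allI impI)
    fix x y assume "c - b \<le> x" "x \<le> y" "y \<le> c - a"
    then show "dist (\<delta> x) (\<delta> y) \<le> - \<Phi> (c - y) - - \<Phi> (c - x)"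
      using P[of "c - y" "c - x"] assms(2) by (simp add: dist_commute)
  qed (use V in simp)
qed

definition is_step :: "(real \<Rightarrow> real) \<Rightarrow> bool" where
  "is_step H \<longleftrightarrow> smooth_fun H \<and> (\<forall>x\<le>0. H x = 0) \<and> (\<forall>x\<ge>1. H x = 1) \<and> (\<forall>x. 0 \<le> H x \<and> H x \<le> 1)"

definition PP :: "(real \<Rightarrow> real) \<Rightarrow> real \<Rightarrow> real \<Rightarrow> real \<Rightarrow> real" where
  "PP H u d y = - y + (u + y) * H ((-2/u) * y + (-1)) - (d - y) * H ((2/d) * y + (-1))"

lemma PP_smooth: "is_step H \<Longrightarrow> smooth_fun (PP H u d)"
proof -
  assume "is_step H"
  then have sH: "smooth_fun H" by (simp add: is_step_def)
  have "smooth_fun (\<lambda>y. (-1) * y + (u + y) * H ((-2/u) * y + (-1)) - (d - y) * H ((2/d) * y + (-1)))"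
    by (intro smooth_diff smooth_add smooth_mult smooth_const smooth_id smooth_affine[OF sH])
  then show ?thesis unfolding PP_def[abs_def] by simp
qed

context
  fixes H :: "real \<Rightarrow> real" and u d :: real
  assumes H: "is_step H" and u: "u > 0" and d: "d > 0"
begin

lemma H0: "x \<le> 0 \<Longrightarrow> H x = 0" and H1: "x \<ge> 1 \<Longrightarrow> H x = 1" and H01: "0 \<le> H x" "H x \<le> 1"
  using H by (auto simp: is_step_def)

lemma PP_pos_side:
  assumes "y \<ge> 0"
  shows "PP H u d y = - y - (d - y) * H ((2/d) * y + (-1))"
proof -
  have "0 \<le> (2/u) * y" using assms u by simp
  moreover have "(-2/u) * y = - ((2/u) * y)" by simp
  ultimately have "(-2/u) * y + (-1) \<le> 0" by linarith
  then show ?thesis by (simp add: PP_def H0)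
qed

lemma PP_neg_side:
  assumes "y \<le> 0"
  shows "PP H u d y = - y + (u + y) * H ((-2/u) * y + (-1))"
proof -
  have "(2/d) * y + (-1) \<le> 0" using assms d by (simp add: mult_nonneg_nonpos divide_nonneg_pos)
  then show ?thesis by (simp add: PP_def H0)
qed

lemma PP_left: "y \<le> -u \<Longrightarrow> PP H u d y = u"
proof -
  assume y: "y \<le> -u"
  have "(-2/u) * y + (-1) \<ge> 1" using y u by (simp add: field_simps)
  then show ?thesis using y u by (simp add: PP_neg_side H1)
qed

lemma PP_right: "y \<ge> d \<Longrightarrow> PP H u d y = - d"
proof -
  assume y: "y \<ge> d"
  have "(2/d) * y + (-1) \<ge> 1" using y d by (simp add: field_simps)
  then show ?thesis using y d by (simp add: PP_pos_side H1)
qed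

lemma PP_mid: "-u/2 \<le> y \<Longrightarrow> y \<le> d/2 \<Longrightarrow> PP H u d y = - y"
proof -
  assume y: "-u/2 \<le> y" "y \<le> d/2"
  show ?thesis
  proof (cases "y \<ge> 0")
    case True
    have "(2/d) * y + (-1) \<le> 0" using y d by (simp add: field_simps)
    then show ?thesis using True by (simp add: PP_pos_side H0)
  next
    case False
    have "(-2/u) * y + (-1) \<le> 0" using y u by (simp add: field_simps)
    then show ?thesis using False by (simp add: PP_neg_side H0)
  qed
qed

lemma PP_bounds: "- d \<le> PP H u d y \<and> PP H u d y \<le> u"
proof (cases "y \<ge> 0")
  case True
  define h where "h = H ((2/d) * y + (-1))"
  have h: "0 \<le> h" "h \<le> 1" using H01 by (auto simp: h_def)
  show ?thesis
  proof (cases "y \<le> d")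
    case True
    have "PP H u d y = - ((1 - h) * y + h * d)" using \<open>y \<ge> 0\<close> by (simp add: PP_pos_side h_def algebra_simps)
    moreover have "0 \<le> (1 - h) * y" "(1 - h) * y \<le> (1 - h) * d" using h \<open>y \<ge> 0\<close> True
      by (auto intro: mult_left_mono)
    moreover have "0 \<le> h * d" using h d by simp
    ultimately show ?thesis using u by (auto simp: algebra_simps)
  next
    case False then show ?thesis using PP_right[of y] u d by simp
  qed
next
  case False
  define h where "h = H ((-2/u) * y + (-1))"
  have h: "0 \<le> h" "h \<le> 1" using H01 by (auto simp: h_def)
  show ?thesis
  proof (cases "y \<ge> -u")
    case True
    have "PP H u d y = (1 - h) * (-y) + h * u" using False by (simp add: PP_neg_side h_def algebra_simps)
    moreover have "0 \<le> (1 - h) * (-y)" by (rule mult_nonneg_nonneg) (use h False in auto)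
    moreover have "(1 - h) * (-y) \<le> (1 - h) * u" by (rule mult_left_mono) (use h True in auto)
    moreover have "0 \<le> h * u" using h u by simp
    ultimately show ?thesis using d by (auto simp: algebra_simps)
  next
    case False then show ?thesis using PP_left[of y] u d by simp
  qed
qed

lemma PP_away_pos:
  assumes "y \<le> - min u d / 4"
  shows "PP H u d y \<ge> min u d / 4"
proof (cases "y \<ge> -u/2")
  case True
  then show ?thesis using assms PP_mid[of y] u d by auto
next
  case False
  define h where "h = H ((-2/u) * y + (-1))"
  have h: "0 \<le> h" "h \<le> 1" using H01 by (auto simp: h_def)
  have "y \<le> 0" using False u by simp
  then have e: "PP H u d y = (1 - h) * (-y) + h * u" by (simp add: PP_neg_side h_def algebra_simps)
  have "(1 - h) * (u/2) \<le> (1 - h) * (-y)" using h False by (intro mult_left_mono) auto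
  moreover have "(1 - h) * (u/2) + h * u = u/2 + h * (u/2)" by (simp add: field_simps)
  moreover have "h * (u/2) \<ge> 0" using h u by simp
  moreover have "h * u \<ge> 0" using h u by simp
  ultimately have "PP H u d y \<ge> u/2" using e by linarith
  then show ?thesis using u d by linarith
qed

lemma PP_away_neg:
  assumes "y \<ge> min u d / 4"
  shows "PP H u d y \<le> - (min u d / 4)"
proof (cases "y \<le> d/2")
  case True
  then show ?thesis using assms PP_mid[of y] u d by auto
next
  case False
  define h where "h = H ((2/d) * y + (-1))"
  have h: "0 \<le> h" "h \<le> 1" using H01 by (auto simp: h_def)
  have "y \<ge> 0" using False d by simp
  then have e: "PP H u d y = - ((1 - h) * y + h * d)" by (simp add: PP_pos_side h_def algebra_simps)
  have "(1 - h) * (d/2) \<le> (1 - h) * y" using h False by (intro mult_left_mono) auto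
  moreover have "(1 - h) * (d/2) + h * d = d/2 + h * (d/2)" by (simp add: field_simps)
  moreover have "h * (d/2) \<ge> 0" using h d by simp
  ultimately have "PP H u d y \<le> - (d/2)" using e by linarith
  then show ?thesis using u d by linarith
qed

end

lemma loc_deriv:
  fixes f :: "real \<Rightarrow> real"
  assumes "open U" "x \<in> U" "\<And>y. y \<in> U \<Longrightarrow> f y = g y" "(g has_real_derivative D) (at x)"
  shows "deriv f x = D"
proof -
  have "(f has_real_derivative D) (at x)"
    by (rule has_field_derivative_transform_within_open[OF assms(4,1,2)]) (simp add: assms(3))
  then show ?thesis by (rule DERIV_imp_deriv)
qed

lemma loc_deriv_const:
  fixes f :: "real \<Rightarrow> real"
  assumes "open U" "x \<in> U" "\<And>y. y \<in> U \<Longrightarrow> f y = c"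
  shows "deriv f x = 0"
proof -
  have "(f has_real_derivative 0) (at x)"
    by (rule has_field_derivative_transform_within_open[OF DERIV_const assms(1,2)]) (simp add: assms(3))
  then show ?thesis by (rule DERIV_imp_deriv)
qed

lemma quot_lip:
  assumes f: "smooth_fun f" and g: "smooth_fun g" and nz: "\<And>y. y \<in> {\<alpha>..\<beta>} \<Longrightarrow> g y \<noteq> 0"
  shows "\<exists>K\<ge>0. \<forall>y\<in>{\<alpha>..\<beta>}. \<forall>y'\<in>{\<alpha>..\<beta>}. \<bar>f y / g y - f y' / g y'\<bar> \<le> K * \<bar>y - y'\<bar>"
proof -
  define G' where "G' y = (deriv f y * g y - f y * deriv g y) / (g y * g y)" for y
  have D: "((\<lambda>y. f y / g y) has_real_derivative G' y) (at y)" if "y \<in> {\<alpha>..\<beta>}" for y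
    unfolding G'_def using smooth_has_deriv[OF f] smooth_has_deriv[OF g] nz[OF that]
    by (rule DERIV_divide)
  have c: "continuous_on {\<alpha>..\<beta>} G'"
    unfolding G'_def using nz
    by (intro continuous_intros continuous_on_subset[OF smooth_cont] smooth_deriv f g) auto
  have "compact (G' ` {\<alpha>..\<beta>})" by (rule compact_continuous_image[OF c compact_Icc])
  then obtain B where B: "\<And>y. y \<in> {\<alpha>..\<beta>} \<Longrightarrow> \<bar>G' y\<bar> \<le> B"
    using compact_imp_bounded bounded_iff by (metis image_eqI real_norm_def)
  have "\<bar>f y / g y - f y' / g y'\<bar> \<le> max B 0 * \<bar>y - y'\<bar>" if "y \<in> {\<alpha>..\<beta>}" "y' \<in> {\<alpha>..\<beta>}" for y y'
  proof -
    have "norm (f y / g y - f y' / g y') \<le> max B 0 * norm (y - y')"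
      using that
      by (intro field_differentiable_bound[where S="{\<alpha>..\<beta>}" and f'=G'])
         (auto intro!: has_field_derivative_at_within[OF D] order_trans[OF B])
    then show ?thesis by simp
  qed
  then show ?thesis by (intro exI[of _ "max B 0"]) auto
qed

lemma VarLe_affine:
  assumes "VarLe \<gamma> A B V" "e > 0"
  shows "VarLe (\<lambda>t. \<gamma> (e * t + k)) ((A - k) / e) ((B - k) / e) V"
proof -
  obtain \<Phi> where P: "\<And>x y. A \<le> x \<Longrightarrow> x \<le> y \<Longrightarrow> y \<le> B \<Longrightarrow> dist (\<gamma> x) (\<gamma> y) \<le> \<Phi> y - \<Phi> x"
    and V: "\<Phi> B - \<Phi> A \<le> V"
    using assms(1) unfolding VarLe_def by blast
  show ?thesis unfolding VarLe_def
  proof (intro exI[of _ "\<lambda>t. \<Phi> (e * t + k)"] conjI allI impI)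
    fix x y assume xy: "(A - k) / e \<le> x" "x \<le> y" "y \<le> (B - k) / e"
    have "A \<le> e * x + k" using xy(1) assms(2) by (simp add: field_simps)
    moreover have "e * x + k \<le> e * y + k" using xy(2) assms(2) by simp
    moreover have "e * y + k \<le> B" using xy(3) assms(2) by (simp add: field_simps)
    ultimately show "dist (\<gamma> (e * x + k)) (\<gamma> (e * y + k)) \<le> \<Phi> (e * y + k) - \<Phi> (e * x + k)"
      by (rule P)
  next
    show "\<Phi> (e * ((B - k) / e) + k) - \<Phi> (e * ((A - k) / e) + k) \<le> V" using V assms(2) by simp
  qed
qed

lemma NV_arc:
  assumes "e > 0"
  shows "NV (- y) (- e) 0 = vector [- sin (arctan (y / e)), - cos (arctan (y / e)), 0]"
proof -
  have r: "sqrt (1 + (y / e)^2) = sqrt (y^2 + e^2) / e"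
  proof -
    have "1 + (y / e)^2 = (y^2 + e^2) / e^2" using assms by (simp add: field_simps)
    then show ?thesis using assms by (simp add: real_sqrt_divide)
  qed
  have pos: "sqrt (y^2 + e^2) > 0" using assms by (simp add: add_nonneg_pos)
  show ?thesis
    unfolding NV_def sin_arctan cos_arctan r vec3_norm vec3_scale
    using assms pos by (simp add: vec3_eq field_simps)
qed

lemma NV_flip: "dist (NV a (-b) c) (NV a' (-b') c') = dist (NV a b c) (NV a' b' c')"
  unfolding NV_def vec3_norm vec3_scale dist_norm vec3_diff by (simp add: power2_commute)

context
  fixes H :: "real \<Rightarrow> real" and u d \<alpha> :: real
  assumes H: "is_step H" and u: "u > 0" and d: "d > 0" and \<alpha>: "\<alpha> > 0"
begin

lemma core:
  "\<exists>e>0. e \<le> 1 \<and> (\<forall>A B. A \<le> -(u+1) \<longrightarrow> d + 1 \<le> B \<longrightarrow>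
     VarLe (\<lambda>y. NV (PP H u d y) (e * deriv (PP H u d) y) (e * e * deriv (deriv (PP H u d)) y)) A B (pi + \<alpha>/2))"
proof -
  define P where "P = PP H u d"
  define D1 where "D1 = deriv P"
  define D2 where "D2 = deriv D1"
  define m where "m = min u d"
  have m: "m > 0" "m \<le> u" "m \<le> d" using u d by (auto simp: m_def)
  have sP: "smooth_fun P" unfolding P_def by (rule PP_smooth[OF H])
  have sD1: "smooth_fun D1" unfolding D1_def by (rule smooth_deriv[OF sP])
  have sD2: "smooth_fun D2" unfolding D2_def by (rule smooth_deriv[OF sD1])
  have D1mid: "D1 y = -1" if "y \<in> {-u/2<..<d/2}" for y
    unfolding D1_def
    by (rule loc_deriv[OF _ that, of _ "\<lambda>y. - y"]) (auto simp: P_def PP_mid[OF H u d] intro!: derivative_eq_intros)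
  have D2mid: "D2 y = 0" if "y \<in> {-u/2<..<d/2}" for y
    unfolding D2_def by (rule loc_deriv_const[OF _ that, of _ "-1"]) (auto simp: D1mid)
  have D1left: "D1 y = 0" if "y < -u" for y
    unfolding D1_def
    by (rule loc_deriv_const[of "{..< -u}" _ _ u]) (use that in \<open>auto simp: P_def PP_left[OF H u d]\<close>)
  have D2left: "D2 y = 0" if "y < -u" for y
    unfolding D2_def by (rule loc_deriv_const[of "{..< -u}" _ _ 0]) (use that in \<open>auto simp: D1left\<close>)
  have D1right: "D1 y = 0" if "y > d" for y
    unfolding D1_def
    by (rule loc_deriv_const[of "{d <..}" _ _ "-d"]) (use that in \<open>auto simp: P_def PP_right[OF H u d]\<close>)
  have D2right: "D2 y = 0" if "y > d" for y
    unfolding D2_def by (rule loc_deriv_const[of "{d <..}" _ _ 0]) (use that in \<open>auto simp: D1right\<close>)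
  have Ppos: "P y \<ge> m/4" if "y \<le> -m/4" for y
    using PP_away_pos[OF H u d, of y] that by (simp add: P_def m_def)
  have Pneg: "P y \<le> -(m/4)" if "y \<ge> m/4" for y
    using PP_away_neg[OF H u d, of y] that by (simp add: P_def m_def)
  have nz1: "P y \<noteq> 0" if "y \<in> {-(u+1)..-m/4}" for y using Ppos[of y] that m by auto
  have nz3: "P y \<noteq> 0" if "y \<in> {m/4..d+1}" for y using Pneg[of y] that m by auto
  obtain K1 where K1: "K1 \<ge> 0" "\<And>y y'. y \<in> {-(u+1)..-m/4} \<Longrightarrow> y' \<in> {-(u+1)..-m/4} \<Longrightarrow>
      \<bar>D1 y / P y - D1 y' / P y'\<bar> \<le> K1 * \<bar>y - y'\<bar>"
    using quot_lip[OF sD1 sP nz1] by blast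
  obtain K2 where K2: "K2 \<ge> 0" "\<And>y y'. y \<in> {-(u+1)..-m/4} \<Longrightarrow> y' \<in> {-(u+1)..-m/4} \<Longrightarrow>
      \<bar>D2 y / P y - D2 y' / P y'\<bar> \<le> K2 * \<bar>y - y'\<bar>"
    using quot_lip[OF sD2 sP nz1] by blast
  obtain K3 where K3: "K3 \<ge> 0" "\<And>y y'. y \<in> {m/4..d+1} \<Longrightarrow> y' \<in> {m/4..d+1} \<Longrightarrow>
      \<bar>D1 y / P y - D1 y' / P y'\<bar> \<le> K3 * \<bar>y - y'\<bar>"
    using quot_lip[OF sD1 sP nz3] by blast
  obtain K4 where K4: "K4 \<ge> 0" "\<And>y y'. y \<in> {m/4..d+1} \<Longrightarrow> y' \<in> {m/4..d+1} \<Longrightarrow>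
      \<bar>D2 y / P y - D2 y' / P y'\<bar> \<le> K4 * \<bar>y - y'\<bar>"
    using quot_lip[OF sD2 sP nz3] by blast
  define K where "K = K1 + K2 + K3 + K4"
  have K: "K \<ge> 0" using K1 K2 K3 K4 by (simp add: K_def)
  define X where "X = 4 * (K + 1) * (u + d + 2)"
  have X: "X > 0" using K u d by (simp add: X_def add_pos_pos)
  define e where "e = min 1 (\<alpha> / X)"
  have e: "e > 0" "e \<le> 1" using \<alpha> X by (auto simp: e_def)
  have eK: "2 * e * K * (u + d + 2) \<le> \<alpha> / 2"
  proof -
    have "e \<le> \<alpha> / X" by (simp add: e_def)
    then have "e * X \<le> \<alpha> / X * X" using X by (intro mult_right_mono) auto
    then have "e * X \<le> \<alpha>" using X by simp
    moreover have "e * K * (u + d + 2) \<le> e * (K + 1) * (u + d + 2)" using e K u d by (simp add: mult_right_mono)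
    ultimately show ?thesis by (simp add: X_def algebra_simps)
  qed
  define T where "T y = NV (P y) (e * D1 y) (e * e * D2 y)" for y
  have lipgen: "dist (T y) (T y') \<le> 2 * e * K * (y' - y)"
    if "P y * P y' > 0" "y \<le> y'"
       and L1: "\<bar>D1 y / P y - D1 y' / P y'\<bar> \<le> K * \<bar>y - y'\<bar>"
       and L2: "\<bar>D2 y / P y - D2 y' / P y'\<bar> \<le> K * \<bar>y - y'\<bar>" for y y'
  proof -
    have "dist (T y) (T y') \<le> \<bar>e * D1 y / P y - e * D1 y' / P y'\<bar> + \<bar>e * e * D2 y / P y - e * e * D2 y' / P y'\<bar>"
      unfolding T_def by (rule NV_lip[OF that(1)])
    also have "\<bar>e * D1 y / P y - e * D1 y' / P y'\<bar> = e * \<bar>D1 y / P y - D1 y' / P y'\<bar>"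
    proof -
      have "e * D1 y / P y - e * D1 y' / P y' = e * (D1 y / P y - D1 y' / P y')" by (simp add: right_diff_distrib)
      then show ?thesis using e by (simp add: abs_mult)
    qed
    also have "\<bar>e * e * D2 y / P y - e * e * D2 y' / P y'\<bar> = (e * e) * \<bar>D2 y / P y - D2 y' / P y'\<bar>"
    proof -
      have "e * e * D2 y / P y - e * e * D2 y' / P y' = (e * e) * (D2 y / P y - D2 y' / P y')" by (simp add: right_diff_distrib)
      then show ?thesis using e by (simp add: abs_mult)
    qed
    also have "e * \<bar>D1 y / P y - D1 y' / P y'\<bar> + (e * e) * \<bar>D2 y / P y - D2 y' / P y'\<bar>
        \<le> e * (K * \<bar>y - y'\<bar>) + e * (K * \<bar>y - y'\<bar>)"
    proof (rule add_mono)
      show "e * \<bar>D1 y / P y - D1 y' / P y'\<bar> \<le> e * (K * \<bar>y - y'\<bar>)" using L1 e by (simp add: mult_left_mono)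
      have "(e * e) * \<bar>D2 y / P y - D2 y' / P y'\<bar> \<le> e * \<bar>D2 y / P y - D2 y' / P y'\<bar>"
        using e by (intro mult_right_mono) (auto simp: mult_le_cancel_left1)
      also have "\<dots> \<le> e * (K * \<bar>y - y'\<bar>)" using L2 e by (simp add: mult_left_mono)
      finally show "(e * e) * \<bar>D2 y / P y - D2 y' / P y'\<bar> \<le> e * (K * \<bar>y - y'\<bar>)" .
    qed
    finally show ?thesis using that(2) by (simp add: algebra_simps)
  qed
  have mpos: "0 < m/4" using m by simp
  show ?thesis
  proof (intro exI[of _ e] conjI allI impI)
    show "0 < e" "e \<le> 1" using e by auto
    fix A B assume A: "A \<le> -(u+1)" and B: "d + 1 \<le> B"
    have V0: "VarLe T A (-(u+1)) 0"
    proof (rule VarLe_const)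
      have "T y = NV u 0 0" if "y \<le> -(u+1)" for y
        using that u by (simp add: T_def P_def PP_left[OF H u d] D1left D2left)
      then show "T y = T A" if "A \<le> y" "y \<le> -(u+1)" for y using that A by simp
    qed
    have V4: "VarLe T (d+1) B 0"
    proof (rule VarLe_const)
      have "T y = NV (-d) 0 0" if "y \<ge> d+1" for y
        using that d by (simp add: T_def P_def PP_right[OF H u d] D1right D2right)
      then show "T y = T (d+1)" if "d+1 \<le> y" "y \<le> B" for y using that B by simp
    qed
    have V1: "VarLe T (-(u+1)) (-m/4) (2 * e * K * (-m/4 - -(u+1)))"
    proof (rule VarLe_lip)
      fix y y' assume yy: "-(u+1) \<le> y" "y \<le> y'" "y' \<le> -m/4"
      have "P y \<ge> m/4" "P y' \<ge> m/4" using Ppos yy by auto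
      then have pp: "P y * P y' > 0" using mpos by (meson less_le_trans mult_pos_pos)
      have "\<bar>D1 y / P y - D1 y' / P y'\<bar> \<le> K1 * \<bar>y - y'\<bar>" using K1(2)[of y y'] yy by auto
      also have "\<dots> \<le> K * \<bar>y - y'\<bar>" using K1 K2 K3 K4 by (intro mult_right_mono) (auto simp: K_def)
      finally have L1: "\<bar>D1 y / P y - D1 y' / P y'\<bar> \<le> K * \<bar>y - y'\<bar>" .
      have "\<bar>D2 y / P y - D2 y' / P y'\<bar> \<le> K2 * \<bar>y - y'\<bar>" using K2(2)[of y y'] yy by auto
      also have "\<dots> \<le> K * \<bar>y - y'\<bar>" using K1 K2 K3 K4 by (intro mult_right_mono) (auto simp: K_def)
      finally have L2: "\<bar>D2 y / P y - D2 y' / P y'\<bar> \<le> K * \<bar>y - y'\<bar>" .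
      show "dist (T y) (T y') \<le> 2 * e * K * (y' - y)" by (rule lipgen[OF pp yy(2) L1 L2])
    qed
    have V3: "VarLe T (m/4) (d+1) (2 * e * K * (d + 1 - m/4))"
    proof (rule VarLe_lip)
      fix y y' assume yy: "m/4 \<le> y" "y \<le> y'" "y' \<le> d+1"
      have "P y \<le> -(m/4)" "P y' \<le> -(m/4)" using Pneg yy by auto
      then have pp: "P y * P y' > 0" using mpos by (smt (verit) mult_neg_neg)
      have "\<bar>D1 y / P y - D1 y' / P y'\<bar> \<le> K3 * \<bar>y - y'\<bar>" using K3(2)[of y y'] yy by auto
      also have "\<dots> \<le> K * \<bar>y - y'\<bar>" using K1 K2 K3 K4 by (intro mult_right_mono) (auto simp: K_def)
      finally have L1: "\<bar>D1 y / P y - D1 y' / P y'\<bar> \<le> K * \<bar>y - y'\<bar>" .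
      have "\<bar>D2 y / P y - D2 y' / P y'\<bar> \<le> K4 * \<bar>y - y'\<bar>" using K4(2)[of y y'] yy by auto
      also have "\<dots> \<le> K * \<bar>y - y'\<bar>" using K1 K2 K3 K4 by (intro mult_right_mono) (auto simp: K_def)
      finally have L2: "\<bar>D2 y / P y - D2 y' / P y'\<bar> \<le> K * \<bar>y - y'\<bar>" .
      show "dist (T y) (T y') \<le> 2 * e * K * (y' - y)" by (rule lipgen[OF pp yy(2) L1 L2])
    qed
    have V2: "VarLe T (-m/4) (m/4) (arctan ((m/4) / e) - arctan ((-m/4) / e))"
    proof (rule VarLe_mono_fun)
      have Tarc: "T y = vector [- sin (arctan (y / e)), - cos (arctan (y / e)), 0]" if "-m/4 \<le> y" "y \<le> m/4" for y
      proof -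
        have yin: "y \<in> {-u/2<..<d/2}" using that m by auto
        have "T y = NV (- y) (- e) 0"
          using yin by (simp add: T_def P_def PP_mid[OF H u d] D1mid D2mid)
        then show ?thesis using NV_arc[OF e(1)] by simp
      qed
      fix y y' assume yy: "-m/4 \<le> y" "y \<le> y'" "y' \<le> m/4"
      have "dist (T y) (T y') \<le> \<bar>arctan (y / e) - arctan (y' / e)\<bar>"
        using Tarc[of y] Tarc[of y'] yy chord_arc by simp
      also have "\<dots> = arctan (y' / e) - arctan (y / e)"
        using yy e by (simp add: arctan_le_iff divide_right_mono)
      finally show "dist (T y) (T y') \<le> arctan (y' / e) - arctan (y / e)" .
    qed
    have "VarLe T A B (0 + 2 * e * K * (-m/4 - -(u+1)) + (arctan ((m/4) / e) - arctan ((-m/4) / e))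
        + 2 * e * K * (d + 1 - m/4) + 0)"
      using A B m u d
      by (intro VarLe_combine[OF _ _ _ V4] VarLe_combine[OF _ _ _ V3] VarLe_combine[OF _ _ _ V2]
          VarLe_combine[OF _ _ V0 V1]) auto
    moreover have "0 + 2 * e * K * (-m/4 - -(u+1)) + (arctan ((m/4) / e) - arctan ((-m/4) / e))
        + 2 * e * K * (d + 1 - m/4) + 0 \<le> pi + \<alpha>/2"
    proof -
      have "arctan ((-m/4) / e) = - arctan ((m/4) / e)" by (simp add: arctan_minus[symmetric])
      then have a: "arctan ((m/4) / e) - arctan ((-m/4) / e) < pi" using arctan_ubound[of "(m/4)/e"] by simp
      have "2 * e * K * (-m/4 - -(u+1)) + 2 * e * K * (d + 1 - m/4) \<le> 2 * e * K * (u + d + 2)"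
      proof -
        have "2 * e * K \<ge> 0" using e K by simp
        then have "2 * e * K * (-m/4 - -(u+1) + (d + 1 - m/4)) \<le> 2 * e * K * (u + d + 2)"
          using m by (intro mult_left_mono) auto
        then show ?thesis by (simp add: algebra_simps)
      qed
      then show ?thesis using a eK by linarith
    qed
    ultimately have "VarLe T A B (pi + \<alpha>/2)" by (rule VarLe_V_mono)
    then show "VarLe (\<lambda>y. NV (PP H u d y) (e * deriv (PP H u d) y) (e * e * deriv (deriv (PP H u d)) y)) A B (pi + \<alpha>/2)"
      by (simp add: T_def[abs_def] P_def D1_def D2_def)
  qed
qed

end

lemma affine_deriv:
  assumes "smooth_fun f"
  shows "((\<lambda>t. f (e * t + k)) has_real_derivative e * deriv f (e * t + k)) (at t)"
proof -
  have "((\<lambda>t. e * t + k) has_real_derivative e) (at t)" by (auto intro!: derivative_eq_intros)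
  from DERIV_chain2[OF smooth_has_deriv[OF assms] this] show ?thesis by (simp add: mult.commute)
qed

lemma PP_D1_mid:
  assumes H: "is_step H" and u: "u > 0" and d: "d > 0" and y: "y \<in> {-u/2<..<d/2}"
  shows "deriv (PP H u d) y = -1"
  by (rule loc_deriv[OF _ y, of _ "\<lambda>y. - y"]) (auto simp: PP_mid[OF H u d] intro!: derivative_eq_intros)

lemma PP_zero:
  assumes H: "is_step H" and u: "u > 0" and d: "d > 0" and "PP H u d y = 0"
  shows "y = 0"
proof -
  have "\<not> y \<le> - min u d / 4" using PP_away_pos[OF H u d, of y] assms(4) u d by auto
  moreover have "\<not> y \<ge> min u d / 4" using PP_away_neg[OF H u d, of y] assms(4) u d by auto
  ultimately have "-u/2 \<le> y" "y \<le> d/2" by auto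
  then show ?thesis using PP_mid[OF H u d] assms(4) by simp
qed

lemma f_construction:
  fixes c u d s \<alpha> :: real
  assumes u: "u > 0" and d: "d > 0" and s: "s > 0" and \<alpha>: "\<alpha> > 0"
  shows "\<exists>S f p p1 p2. S > 0 \<and> smooth_fun f \<and> (\<forall>t. (f has_real_derivative p t) (at t))
    \<and> (\<forall>t. (p has_real_derivative p1 t) (at t)) \<and> (\<forall>t. (p1 has_real_derivative p2 t) (at t))
    \<and> (\<forall>t\<le>0. f t = u * t + c) \<and> (\<forall>t\<ge>S. f t = - d * (t - S) + c)
    \<and> (\<forall>t. \<bar>p t\<bar> \<le> max u d) \<and> (\<forall>t. vector [p t, p1 t, p2 t] \<noteq> (0::real^3))
    \<and> VarLe (\<lambda>t. NV (p t) (p1 t) (p2 t)) (-s) (S+s) (pi + \<alpha>/2)"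
proof -
  obtain H where H: "is_step H" using smooth_step_exists unfolding is_step_def by blast
  obtain e where e: "e > 0" "e \<le> 1" and core: "\<And>A B. A \<le> -(u+1) \<Longrightarrow> d + 1 \<le> B \<Longrightarrow>
     VarLe (\<lambda>y. NV (PP H u d y) (e * deriv (PP H u d) y) (e * e * deriv (deriv (PP H u d)) y)) A B (pi + \<alpha>/2)"
    using core[OF H u d \<alpha>] by blast
  define P where "P = PP H u d"
  define D1 where "D1 = deriv P"
  define D2 where "D2 = deriv D1"
  have sP: "smooth_fun P" unfolding P_def by (rule PP_smooth[OF H])
  have sD1: "smooth_fun D1" unfolding D1_def by (rule smooth_deriv[OF sP])
  define t0 where "t0 = (u + 1) / e + d * (u + d + 1) / (u * e)"
  define k where "k = - (e * t0)"
  define p where "p t = P (e * t + k)" for t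
  define p1 where "p1 t = e * D1 (e * t + k)" for t
  define p2 where "p2 t = e * e * D2 (e * t + k)" for t
  have dp: "(p has_real_derivative p1 t) (at t)" for t
    unfolding p_def p1_def D1_def by (rule affine_deriv[OF sP])
  have dp1: "(p1 has_real_derivative p2 t) (at t)" for t
  proof -
    have "((\<lambda>t. e * D1 (e * t + k)) has_real_derivative e * (e * deriv D1 (e * t + k))) (at t)"
      by (intro DERIV_cmult affine_deriv[OF sD1])
    then show ?thesis unfolding p1_def[abs_def] p2_def D2_def by (simp add: mult.assoc)
  qed
  have sp: "smooth_fun p" unfolding p_def[abs_def] by (rule smooth_affine[OF sP])
  obtain F where F: "\<And>t. (F has_real_derivative p t) (at t)"
    using antideriv_exists[OF smooth_cont[OF sp]] by blast
  define f where "f t = F t - F 0 + c" for t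
  have df: "(f has_real_derivative p t) (at t)" for t
    unfolding f_def[abs_def] using F[of t] by (auto intro!: derivative_eq_intros)
  have sf: "smooth_fun f" by (rule smooth_antideriv[OF df sp])
  have f0: "f 0 = c" by (simp add: f_def)
  define a' where "a' = t0 - u / e"
  have a'_eq: "a' = 1 / e + d * (u + d + 1) / (u * e)" using e u by (simp add: a'_def t0_def field_simps)
  have a'pos: "a' > 0" unfolding a'_eq using e u d by (intro add_pos_nonneg) auto
  define b where "b = t0 + (d + 1) / e"
  have ab: "a' < b" using e u d by (simp add: a'_def b_def field_simps add_pos_pos)
  have pleft: "p t = u" if "t \<le> a'" for t
  proof -
    have "e * t + k \<le> e * a' + k" using that e by simp
    also have "e * a' + k = - u" using e by (simp add: a'_def k_def field_simps)
    finally show ?thesis unfolding p_def P_def by (rule PP_left[OF H u d])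
  qed
  have yright: "e * t + k \<ge> d + 1" if "t \<ge> b" for t
  proof -
    have "e * t + k \<ge> e * b + k" using that e by simp
    moreover have "e * b + k = d + 1" using e by (simp add: b_def k_def field_simps)
    ultimately show ?thesis by simp
  qed
  have pright: "p t = - d" if "t \<ge> b" for t
    using yright[OF that] d unfolding p_def P_def by (intro PP_right[OF H u d]) simp
  have fleft: "f t = u * t + c" if "t \<le> a'" for t
  proof -
    have "\<exists>C. \<forall>x\<in>{..a'}. f x - u * x = C"
    proof (rule has_field_derivative_zero_constant)
      fix x assume "x \<in> {..a'}"
      then have "((\<lambda>x. f x - u * x) has_real_derivative p x - u) (at x)"
        by (auto intro!: derivative_eq_intros df)
      then show "((\<lambda>x. f x - u * x) has_real_derivative 0) (at x within {..a'})"
        using pleft \<open>x \<in> {..a'}\<close> by (auto intro: has_field_derivative_at_within)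
    qed simp
    then obtain C where C: "\<And>x. x \<le> a' \<Longrightarrow> f x - u * x = C" by auto
    have "C = c" using C[of 0] a'pos f0 by simp
    then show ?thesis using C[OF that] by simp
  qed
  have fright: "f t = f b - d * (t - b)" if "t \<ge> b" for t
  proof -
    have "\<exists>C. \<forall>x\<in>{b..}. f x + d * x = C"
    proof (rule has_field_derivative_zero_constant)
      fix x assume "x \<in> {b..}"
      then have "((\<lambda>x. f x + d * x) has_real_derivative p x + d) (at x)"
        by (auto intro!: derivative_eq_intros df)
      then show "((\<lambda>x. f x + d * x) has_real_derivative 0) (at x within {b..})"
        using pright \<open>x \<in> {b..}\<close> by (auto intro: has_field_derivative_at_within)
    qed simp
    then obtain C where C: "\<And>x. x \<ge> b \<Longrightarrow> f x + d * x = C" by auto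
    show ?thesis using C[OF that] C[of b] by (simp add: algebra_simps)
  qed
  have pbound: "- d \<le> p t \<and> p t \<le> u" for t unfolding p_def P_def by (rule PP_bounds[OF H u d])
  have fb: "f b \<ge> c"
  proof -
    have "((\<lambda>x. f x + d * x) has_real_derivative p x + d) (at x)" for x
      by (auto intro!: derivative_eq_intros df)
    from MVT2[OF ab this] obtain z where "f b + d * b - (f a' + d * a') = (b - a') * (p z + d)" by blast
    moreover have "(b - a') * (p z + d) \<ge> 0" using ab pbound[of z] by simp
    ultimately have "f b \<ge> f a' + d * a' - d * b" by simp
    moreover have "f a' = u * a' + c" by (rule fleft) simp
    moreover have "u * a' + d * a' - d * b = u / e"
      using e u by (simp add: a'_eq b_def t0_def field_simps)
    moreover have "u / e > 0" using e u by simp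
    ultimately show ?thesis by linarith
  qed
  define S where "S = b + (f b - c) / d"
  have Sb: "S \<ge> b" using fb d by (simp add: S_def)
  have bpos: "b > 0" using ab a'pos by simp
  have G1: "S > 0" using Sb bpos by simp
  have G2: "f t = u * t + c" if "t \<le> 0" for t using that a'pos by (intro fleft) simp
  have G3: "f t = - d * (t - S) + c" if "t \<ge> S" for t
  proof -
    have "f t = f b - d * (t - b)" using that Sb by (intro fright) simp
    moreover have "f b = c + d * (S - b)" using d by (simp add: S_def)
    ultimately show ?thesis by (simp add: algebra_simps)
  qed
  have G4: "\<bar>p t\<bar> \<le> max u d" for t using pbound[of t] by auto
  have G5: "vector [p t, p1 t, p2 t] \<noteq> (0::real^3)" for t
  proof
    assume "vector [p t, p1 t, p2 t] = (0::real^3)"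
    then have z: "p t = 0" "p1 t = 0" by (auto simp: vec3_zero)
    then have "e * t + k = 0" using PP_zero[OF H u d] unfolding p_def P_def by blast
    then have "D1 (e * t + k) = -1" unfolding D1_def P_def using u d by (intro PP_D1_mid[OF H u d]) auto
    then show False using z e by (simp add: p1_def)
  qed
  have G6: "VarLe (\<lambda>t. NV (p t) (p1 t) (p2 t)) (- s) (S + s) (pi + \<alpha> / 2)"
  proof -
    have A: "e * (-s) + k \<le> -(u+1)"
    proof -
      have "e * (-s) + k \<le> k" using e s by simp
      moreover have "k \<le> -(u+1)"
      proof -
        have "e * t0 = (u + 1) + d * (u + d + 1) / u" using e u by (simp add: t0_def field_simps)
        moreover have "d * (u + d + 1) / u \<ge> 0" using u d by simp
        ultimately show ?thesis by (simp add: k_def)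
      qed
      ultimately show ?thesis by simp
    qed
    have B: "d + 1 \<le> e * (S + s) + k" using yright[of "S + s"] Sb s by simp
    have "VarLe (\<lambda>t. NV (P (e * t + k)) (e * D1 (e * t + k)) (e * e * D2 (e * t + k)))
        ((e * (-s) + k - k) / e) ((e * (S + s) + k - k) / e) (pi + \<alpha>/2)"
      using VarLe_affine[OF core[OF A B] e(1), of k] by (simp add: P_def D1_def D2_def)
    then show ?thesis using e by (simp add: p_def p1_def p2_def)
  qed
  show ?thesis
    apply (rule exI[of _ S], rule exI[of _ f], rule exI[of _ p], rule exI[of _ p1], rule exI[of _ p2])
    using G1 sf df dp dp1 G2 G3 G4 G5 G6 by blast
qed

theorem lemma6p4:
  fixes c u d s \<alpha> :: real
  assumes "c > 0" "u > 0" "d > 0" "s > 0" "\<alpha> > 0"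
  shows "\<exists>S f g. S > 0 \<and> smooth_fun f \<and> smooth_fun g
    \<and> (\<forall>t\<in>{-s..0}. f t = u * t + c \<and> g t = - d * t - c)
    \<and> (\<forall>t\<in>{S..S+s}. f t = - d * (t - S) + c \<and> g t = u * (t - S) - c)
    \<and> (\<forall>t\<in>{-s..S+s}. \<bar>deriv f t\<bar> \<le> max u d \<and> \<bar>deriv g t\<bar> \<le> max u d)
    \<and> regular_curve_on (holonomic f) (-s) (S+s) \<and> regular_curve_on (holonomic g) (-s) (S+s)
    \<and> total_curvature (holonomic f) (-s) (S+s) < ereal (pi + \<alpha>)
    \<and> total_curvature (holonomic g) (-s) (S+s) < ereal (pi + \<alpha>)"
proof -
  obtain S f p p1 p2 where S: "S > 0" and sf: "smooth_fun f"
    and df: "\<And>t. (f has_real_derivative p t) (at t)"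
    and dp: "\<And>t. (p has_real_derivative p1 t) (at t)"
    and dp1: "\<And>t. (p1 has_real_derivative p2 t) (at t)"
    and fl: "\<And>t. t \<le> 0 \<Longrightarrow> f t = u * t + c"
    and fr: "\<And>t. t \<ge> S \<Longrightarrow> f t = - d * (t - S) + c"
    and pb: "\<And>t. \<bar>p t\<bar> \<le> max u d"
    and nz: "\<And>t. vector [p t, p1 t, p2 t] \<noteq> (0::real^3)"
    and V: "VarLe (\<lambda>t. NV (p t) (p1 t) (p2 t)) (-s) (S+s) (pi + \<alpha>/2)"
    using f_construction[OF assms(2-5), of c] by blast
  define g where "g t = - f (S - t)" for t
  have sg: "smooth_fun g"
  proof -
    have "smooth_fun (\<lambda>t. (-1) * f ((-1) * t + S))" by (intro smooth_mult smooth_const smooth_affine sf)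
    then show ?thesis unfolding g_def[abs_def] by simp
  qed
  have Df: "deriv f = p" using df by (rule deriv_fun_eq)
  have Dp: "deriv p = p1" using dp by (rule deriv_fun_eq)
  have hf: "holonomic f = (\<lambda>t. vector [f t, p t, p1 t])"
    by (simp add: holonomic_def[abs_def] Df Dp)
  have vf: "((holonomic f) has_vector_derivative vector [p t, p1 t, p2 t]) (at t)" for t
    unfolding hf by (intro vec3_deriv df dp dp1)
  define q where "q t = p (S - t)" for t
  define q1 where "q1 t = - p1 (S - t)" for t
  define q2 where "q2 t = p2 (S - t)" for t
  have refl_deriv: "((\<lambda>t. h (S - t)) has_real_derivative - h' (S - t)) (at t)"
    if "\<And>t. (h has_real_derivative h' t) (at t)" for h h' t
  proof -
    have "((\<lambda>t. S - t) has_real_derivative -1) (at t)" by (auto intro!: derivative_eq_intros)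
    from DERIV_chain2[OF that this] show ?thesis by simp
  qed
  have dg: "(g has_real_derivative q t) (at t)" for t
    unfolding g_def[abs_def] q_def using refl_deriv[OF df, of t] by (auto intro!: derivative_eq_intros)
  have dq: "(q has_real_derivative q1 t) (at t)" for t
    unfolding q_def[abs_def] q1_def using refl_deriv[OF dp, of t] by simp
  have dq1: "(q1 has_real_derivative q2 t) (at t)" for t
    unfolding q1_def[abs_def] q2_def using refl_deriv[OF dp1, of t] by (auto intro!: derivative_eq_intros)
  have Dg: "deriv g = q" using dg by (rule deriv_fun_eq)
  have Dq: "deriv q = q1" using dq by (rule deriv_fun_eq)
  have hg: "holonomic g = (\<lambda>t. vector [g t, q t, q1 t])"
    by (simp add: holonomic_def[abs_def] Dg Dq)
  have vg: "((holonomic g) has_vector_derivative vector [q t, q1 t, q2 t]) (at t)" for t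
    unfolding hg by (intro vec3_deriv dg dq dq1)
  have Tf: "unit_tangent (holonomic f) = (\<lambda>t. NV (p t) (p1 t) (p2 t))"
    by (rule ext) (simp add: unit_tangent_def NV_def vector_derivative_at[OF vf])
  have Tg: "unit_tangent (holonomic g) = (\<lambda>t. NV (q t) (q1 t) (q2 t))"
    by (rule ext) (simp add: unit_tangent_def NV_def vector_derivative_at[OF vg])
  have Vg: "VarLe (\<lambda>t. NV (q t) (q1 t) (q2 t)) (S - (S+s)) (S - (-s)) (pi + \<alpha>/2)"
    by (rule VarLe_reverse[OF V]) (simp add: q_def q1_def q2_def NV_flip)
  have lt: "ereal (pi + \<alpha>/2) < ereal (pi + \<alpha>)" using assms(5) by simp
  have cf: "total_curvature (holonomic f) (-s) (S+s) < ereal (pi + \<alpha>)"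
    unfolding total_curvature_def Tf using curve_length_le[OF V] lt by (rule le_less_trans)
  have cg: "total_curvature (holonomic g) (-s) (S+s) < ereal (pi + \<alpha>)"
    unfolding total_curvature_def Tg using curve_length_le[OF Vg] lt by (simp add: le_less_trans)
  have rf: "regular_curve_on (holonomic f) (-s) (S+s)"
    unfolding regular_curve_on_def
  proof (intro ballI conjI)
    fix t
    show "holonomic f differentiable (at t)" using vf[of t] by (rule differentiableI_vector)
    show "vector_derivative (holonomic f) (at t) \<noteq> 0" using nz[of t] by (simp add: vector_derivative_at[OF vf])
  qed
  have rg: "regular_curve_on (holonomic g) (-s) (S+s)"
  proof -
    have nzg: "vector [q t, q1 t, q2 t] \<noteq> (0::real^3)" for t
      using nz[of "S - t"] by (simp add: q_def q1_def q2_def vec3_zero)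
    show ?thesis unfolding regular_curve_on_def
    proof (intro ballI conjI)
      fix t
      show "holonomic g differentiable (at t)" using vg[of t] by (rule differentiableI_vector)
      show "vector_derivative (holonomic g) (at t) \<noteq> 0" using nzg[of t] by (simp add: vector_derivative_at[OF vg])
    qed
  qed
  have bounds: "\<forall>t\<in>{-s..S+s}. \<bar>deriv f t\<bar> \<le> max u d \<and> \<bar>deriv g t\<bar> \<le> max u d"
    using pb by (simp add: Df Dg q_def)
  have left: "\<forall>t\<in>{-s..0}. f t = u * t + c \<and> g t = - d * t - c"
  proof
    fix t assume t: "t \<in> {-s..0}"
    have "f (S - t) = - d * (S - t - S) + c" using t by (intro fr) simp
    then show "f t = u * t + c \<and> g t = - d * t - c" using t fl[of t] by (simp add: g_def algebra_simps)
  qed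
  have right: "\<forall>t\<in>{S..S+s}. f t = - d * (t - S) + c \<and> g t = u * (t - S) - c"
  proof
    fix t assume t: "t \<in> {S..S+s}"
    have "f (S - t) = u * (S - t) + c" using t by (intro fl) simp
    then show "f t = - d * (t - S) + c \<and> g t = u * (t - S) - c" using t fr[of t] by (simp add: g_def algebra_simps)
  qed
  show ?thesis
    apply (rule exI[of _ S], rule exI[of _ f], rule exI[of _ g])
    using S sf sg left right bounds rf rg cf cg by blast
qed

end
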